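(* Let $X=\{x\in\mathbb{R}^n: l\le x\le u\}$ and $\mathcal{Z}=\{x\in\mathbb{R}^n: x_i\in\mathbb{Z}\ \text{for all } i\in I^z\}$ as in the context. Then the set $\bar D=\bigcup_{x\in X\cap\mathcal{Z}} D^z(x)$ has finitely many elements.
   Context: Let $\{1,\dots,n\}=I^c\cup I^z$ with $I^c\cap I^z=\emptyset$. For $v\in\mathbb{R}^n$ let $v_z=(v_i)_{i\in I^z}$. Let $l,u\in\mathbb{R}^n$ (finite) with $l_i<u_i$ for all $i$ and $l_i,u_i\in\mathbb{Z}$ for $i\in I^z$. A vector $w\in\mathbb{Z}^p$ is called primitive if the greatest common divisor of its components is $1$. For $x\in X\cap\mathcal{Z}$, the set of feasible primitive directions is $D^z(x)=\{d\in\mathbb{Z}^n:\ d_i=0 \text{ for all } i\in I^c,\ d_z \text{ is primitive},\ x+d\in X\cap\mathcal{Z}\}$. *)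

theory Defs
  imports "HOL-Analysis.Analysis"
begin

text \<open>Vectors in R^n are modelled as real^'n with a finite index type 'n.
 Iz is the set of integer indices; the continuous indices are its complement.\<close>

definition boxX :: "real^'n \<Rightarrow> real^'n \<Rightarrow> (real^'n) set" where
  "boxX l u = {x. \<forall>i. l$i \<le> x$i \<and> x$i \<le> u$i}"

definition intZ :: "'n set \<Rightarrow> (real^'n) set" where
  "intZ Iz = {x. \<forall>i\<in>Iz. x$i \<in> \<int>}"

definition is_int_vec :: "real^'n \<Rightarrow> bool" where
  "is_int_vec d \<longleftrightarrow> (\<forall>i. d$i \<in> \<int>)"

definition primitive_on :: "'n set \<Rightarrow> real^'n \<Rightarrow> bool" where
  "primitive_on Iz d \<longleftrightarrow> Gcd ((\<lambda>i. \<lfloor>d$i\<rfloor>) ` Iz) = (1::int)"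

definition Dz :: "'n set \<Rightarrow> real^'n \<Rightarrow> real^'n \<Rightarrow> real^'n \<Rightarrow> (real^'n) set" where
  "Dz Iz l u x = {d. is_int_vec d \<and> (\<forall>i. i \<notin> Iz \<longrightarrow> d$i = 0) \<and> primitive_on Iz d
                    \<and> x + d \<in> boxX l u \<inter> intZ Iz}"

end

theory Submission
  imports Defs
begin

theorem mainTheorem1:
  fixes l u :: "real^'n" and Iz :: "'n set"
  assumes "\<forall>i. l$i < u$i"
    and "\<forall>i\<in>Iz. l$i \<in> \<int> \<and> u$i \<in> \<int>"
  shows "finite (\<Union>x\<in>boxX l u \<inter> intZ Iz. Dz Iz l u x)"
proof -
  define M where "M = (\<Sum>i\<in>UNIV. \<bar>u$i - l$i\<bar>)"
  define K where "K = \<lceil>M\<rceil>"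
  define S where "S = (of_int ` {-K..K} :: real set)"
  have fS: "finite S" unfolding S_def by simp
  have bnd: "\<bar>u$i - l$i\<bar> \<le> M" for i
    unfolding M_def by (rule member_le_sum) auto
  have sub: "(\<Union>x\<in>boxX l u \<inter> intZ Iz. Dz Iz l u x) \<subseteq> vec_lambda ` (PiE UNIV (\<lambda>_. S))"
  proof
    fix d assume "d \<in> (\<Union>x\<in>boxX l u \<inter> intZ Iz. Dz Iz l u x)"
    then obtain x where x: "x \<in> boxX l u" and d: "d \<in> Dz Iz l u x" by auto
    have "d$i \<in> S" for i
    proof -
      have xi: "l$i \<le> x$i" "x$i \<le> u$i" using x unfolding boxX_def by auto
      have "x + d \<in> boxX l u" using d unfolding Dz_def by auto
      hence xdi: "l$i \<le> x$i + d$i" "x$i + d$i \<le> u$i" unfolding boxX_def by auto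
      have ab: "\<bar>d$i\<bar> \<le> M" using xi xdi bnd[of i] by linarith
      have "d$i \<in> \<int>" using d unfolding Dz_def is_int_vec_def by auto
      then obtain k where k: "d$i = of_int k" by (auto elim: Ints_cases)
      have "\<bar>real_of_int k\<bar> \<le> M" using ab k by simp
      hence r1: "real_of_int k \<le> M" and r2: "real_of_int (-k) \<le> M" by linarith+
      have "k \<le> K" using ceiling_mono[OF r1] unfolding K_def by simp
      moreover have "-K \<le> k" using ceiling_mono[OF r2] unfolding K_def by (simp del: of_int_minus add: of_int_minus[symmetric])
      ultimately have "k \<le> K" "-K \<le> k" by simp_all
      thus ?thesis unfolding S_def using k by auto
    qed
    hence "vec_nth d \<in> PiE UNIV (\<lambda>_. S)" by auto
    moreover have "d = vec_lambda (vec_nth d)" by simp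
    ultimately show "d \<in> vec_lambda ` (PiE UNIV (\<lambda>_. S))" by blast
  qed
  have "finite (vec_lambda ` (PiE UNIV (\<lambda>_. S)) :: (real^'n) set)"
    using fS by (intro finite_imageI finite_PiE) auto
  thus ?thesis using sub finite_subset by blast
qed

end
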